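(* Let $\mathbf{Z}=\{\mathbf{z}_i\}_{i=1}^n$ be a $G$-networked sample and $\xi$ a function on $\mathcal{Z}$ with mean $\mu$, variance $\sigma^2$, and $|\xi(\mathbf{z})-\mu|\le M$ for $\rho$-almost all $\mathbf{z}$. If $\mathbf{w}$ is an optimal weighting of $G$ and $\mathsf{s}=\mathsf{s}(G)$, then for all $\epsilon>0$, $$\Pr\Big(\sum_{i=1}^n w_i(\xi(\mathbf{z}_i)-\mu)\ge\epsilon\Big)\le\exp\Big(-\frac{\epsilon^2}{2(\mathsf{s}\sigma^2+\frac13 M\epsilon)}\Big).$$
   Context: Networked setting: $G$ is a $k$-partite hypergraph with hyperedges $e_1,\dots,e_n$; vertex set partitioned into $V^{(1)},\dots,V^{(k)}$, each hyperedge containing exactly one vertex $e^{(j)}$ of each $V^{(j)}$. $\mathcal{X}=\mathcal{X}^{(1)}\times\cdots\times\mathcal{X}^{(k)}$ (compact metric spaces), $\mathcal{Y}=\mathbb{R}$, $\mathcal{Z}=\mathcal{X}\times\mathcal{Y}$. Each vertex $v\in V^{(j)}$ gets a feature $\phi(v)$ drawn independently from $\rho_j$, independently of the hypergraph. Hyperedge $e_i$ yields $\mathbf{z}_i=(\mathbf{x}_i,y_i)$, $\mathbf{x}_i=(\phi(e_i^{(1)}),\dots,\phi(e_i^{(k)}))$, labels conditionally independent given the features with $y_i\sim\rho_{y|\mathbf{x}}(\cdot\mid\mathbf{x}_i)$; $\rho=\rho_{y|\mathbf{x}}\rho_{\mathbf{x}}$ with $\rho_{\mathbf{x}}=\prod_j\rho_j$,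 and mean/variance of $\xi$ are with respect to $\rho$. A feasible weighting is $\mathbf{w}$ with $w_i\ge0$ and $\sum_{i:\,v\in e_i}w_i\le1$ for every vertex $v$; $\mathsf{s}(G)=\max\sum_i w_i$ over feasible weightings, attained by an optimal weighting. *)

theory Defs
  imports "HOL-Probability.Probability"
begin

text \<open>A k-partite hypergraph with hyperedges indexed by i < n: the vertex of part j
  (j < k) in hyperedge i is the vertex (j, e i j).  Vertices are pairs (part, label).\<close>

definition hg_vertices :: "nat \<Rightarrow> nat \<Rightarrow> (nat \<Rightarrow> nat \<Rightarrow> 'v) \<Rightarrow> (nat \<times> 'v) set" where
  "hg_vertices k n e = {(j, e i j) | i j. i < n \<and> j < k}"

definition feasible_weighting :: "nat \<Rightarrow> nat \<Rightarrow> (nat \<Rightarrow> nat \<Rightarrow> 'v) \<Rightarrow> (nat \<Rightarrow> real) \<Rightarrow> bool" where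
  "feasible_weighting k n e w \<longleftrightarrow>
     (\<forall>i<n. 0 \<le> w i) \<and> (\<forall>j<k. \<forall>a. (\<Sum>i | i < n \<and> e i j = a. w i) \<le> 1)"

definition s_value :: "nat \<Rightarrow> nat \<Rightarrow> (nat \<Rightarrow> nat \<Rightarrow> 'v) \<Rightarrow> real" where
  "s_value k n e = Sup {(\<Sum>i<n. w i) | w. feasible_weighting k n e w}"

definition optimal_weighting :: "nat \<Rightarrow> nat \<Rightarrow> (nat \<Rightarrow> nat \<Rightarrow> 'v) \<Rightarrow> (nat \<Rightarrow> real) \<Rightarrow> bool" where
  "optimal_weighting k n e w \<longleftrightarrow>
     feasible_weighting k n e w \<and> (\<Sum>i<n. w i) = s_value k n e"

definition edge_feat :: "nat \<Rightarrow> (nat \<Rightarrow> nat \<Rightarrow> 'v) \<Rightarrow> (nat \<times> 'v \<Rightarrow> 'x) \<Rightarrow> nat \<Rightarrow> (nat \<Rightarrow> 'x)" where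
  "edge_feat k e \<phi> i = (\<lambda>j\<in>{..<k}. \<phi> (j, e i j))"

text \<open>The distribution rho on Z = X \<times> R: x ~ product of rho_j, then y ~ K x.\<close>

definition data_dist :: "nat \<Rightarrow> (nat \<Rightarrow> 'x measure) \<Rightarrow> ((nat \<Rightarrow> 'x) \<Rightarrow> real measure)
    \<Rightarrow> ((nat \<Rightarrow> 'x) \<times> real) measure" where
  "data_dist k \<rho> K =
     (PiM {..<k} \<rho>) \<bind> (\<lambda>x. distr (K x) (PiM {..<k} \<rho> \<Otimes>\<^sub>M borel) (\<lambda>y. (x, y)))"

definition networked_sample :: "nat \<Rightarrow> nat \<Rightarrow> (nat \<Rightarrow> nat \<Rightarrow> 'v) \<Rightarrow> (nat \<Rightarrow> 'x measure)
    \<Rightarrow> ((nat \<Rightarrow> 'x) \<Rightarrow> real measure) \<Rightarrow> ((nat \<times> 'v \<Rightarrow> 'x) \<times> (nat \<Rightarrow> real)) measure" where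
  "networked_sample k n e \<rho> K =
     (let FM = PiM (hg_vertices k n e) (\<lambda>v. \<rho> (fst v))
      in FM \<bind> (\<lambda>\<phi>. distr (PiM {..<n} (\<lambda>i. K (edge_feat k e \<phi> i)))
                          (FM \<Otimes>\<^sub>M PiM {..<n} (\<lambda>_. borel)) (\<lambda>ys. (\<phi>, ys))))"

end

theory Submission
  imports Defs
begin



lemma amgm_slack:
  fixes t w :: "'l \<Rightarrow> real"
  assumes A: "finite A" and t: "\<And>l. l\<in>A \<Longrightarrow> 0 < t l" and w: "\<And>l. l\<in>A \<Longrightarrow> 0 \<le> w l"
    and W: "(\<Sum>l\<in>A. w l) \<le> 1"
  shows "(\<Prod>l\<in>A. t l powr w l) \<le> (\<Sum>l\<in>A. w l * t l) + (1 - (\<Sum>l\<in>A. w l))"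
proof -
  define Q where "Q = (\<Sum>l\<in>A. w l * t l) + (1 - (\<Sum>l\<in>A. w l))"
  define SW where "SW = (\<Sum>l\<in>A. w l)"
  have wt: "0 \<le> w l * t l" if "l \<in> A" for l using t[OF that] w[OF that] by simp
  have SWt: "0 \<le> (\<Sum>l\<in>A. w l * t l)" using wt by (intro sum_nonneg) auto
  have Q: "0 < Q"
  proof (cases "SW < 1")
    case True then show ?thesis using SWt by (simp add: Q_def SW_def)
  next
    case False
    then have "SW = 1" using W SW_def by simp
    then obtain l where l: "l \<in> A" "w l \<noteq> 0" unfolding SW_def by (metis sum.neutral zero_neq_one)
    then have "0 < w l * t l" using w t by (simp add: less_le)
    also have "w l * t l \<le> (\<Sum>l\<in>A. w l * t l)"
      using l A wt by (intro member_le_sum) auto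
    finally show ?thesis using W by (simp add: Q_def)
  qed
  have "(\<Sum>l\<in>A. w l * ln (t l)) - SW * ln Q = (\<Sum>l\<in>A. w l * ln (t l / Q))"
  proof -
    have "(\<Sum>l\<in>A. w l * ln (t l / Q)) = (\<Sum>l\<in>A. w l * ln (t l) - w l * ln Q)"
      using t Q by (intro sum.cong) (auto simp: ln_div right_diff_distrib dest: t)
    then show ?thesis by (simp add: SW_def sum_subtractf sum_distrib_right)
  qed
  also have "\<dots> \<le> (\<Sum>l\<in>A. w l * (t l / Q - 1))"
    using t Q w by (intro sum_mono mult_left_mono ln_le_minus_one) auto
  also have "\<dots> = (\<Sum>l\<in>A. w l * t l) / Q - SW"
    by (simp add: SW_def right_diff_distrib sum_subtractf sum_divide_distrib)
  finally have 1: "(\<Sum>l\<in>A. w l * ln (t l)) \<le> SW * ln Q + (\<Sum>l\<in>A. w l * t l) / Q - SW" by simp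
  have "ln (1 / Q) \<le> 1 / Q - 1" using Q by (intro ln_le_minus_one) auto
  then have "0 \<le> ln Q + 1/Q - 1" using Q by (simp add: ln_div)
  then have 2: "0 \<le> (1 - SW) * (ln Q + 1/Q - 1)" using W SW_def by simp
  have "SW * ln Q + (\<Sum>l\<in>A. w l * t l) / Q - SW + (1 - SW) * (ln Q + 1/Q - 1)
       = ln Q + ((\<Sum>l\<in>A. w l * t l) + (1 - SW)) / Q - 1"
    by (simp add: algebra_simps add_divide_distrib diff_divide_distrib)
  also have "\<dots> = ln Q" using Q by (simp add: Q_def SW_def)
  finally have 3: "(\<Sum>l\<in>A. w l * ln (t l)) \<le> ln Q" using 1 2 by linarith
  have "(\<Prod>l\<in>A. t l powr w l) = (\<Prod>l\<in>A. exp (w l * ln (t l)))"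
    using t by (intro prod.cong) (auto simp: powr_def dest: t)
  also have "\<dots> = exp (\<Sum>l\<in>A. w l * ln (t l))" using A by (simp add: exp_sum)
  also have "\<dots> \<le> exp (ln Q)" using 3 by simp
  also have "\<dots> = Q" using Q by simp
  finally show ?thesis by (simp add: Q_def)
qed

lemma holder_family:
  fixes h :: "'l \<Rightarrow> 'a \<Rightarrow> real"
  assumes N: "prob_space N" and A: "finite A"
    and hm: "\<And>l. l\<in>A \<Longrightarrow> h l \<in> borel_measurable N"
    and hb: "\<And>l y. l\<in>A \<Longrightarrow> y \<in> space N \<Longrightarrow> a \<le> h l y \<and> h l y \<le> b" and a: "0 < a"
    and w: "\<And>l. l\<in>A \<Longrightarrow> 0 \<le> w l" and W: "(\<Sum>l\<in>A. w l) \<le> 1"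
  shows "(\<integral>y. (\<Prod>l\<in>A. h l y powr w l) \<partial>N) \<le> (\<Prod>l\<in>A. (\<integral>y. h l y \<partial>N) powr w l)"
proof -
  interpret prob_space N by fact
  define m where "m l = (\<integral>y. h l y \<partial>N)" for l
  have int: "integrable N (h l)" if "l \<in> A" for l
    using hb[OF that] a hm[OF that] by (intro integrable_const_bound[where B=b] AE_I2) (auto, metis abs_of_pos less_le_trans)
  have m: "a \<le> m l" if "l \<in> A" for l
    unfolding m_def using hb[OF that] by (intro integral_ge_const int that AE_I2) auto
  define P where "P = (\<Prod>l\<in>A. m l powr w l)"
  have P0: "0 \<le> P" unfolding P_def by (intro prod_nonneg) auto
  have pt: "(\<Prod>l\<in>A. h l y powr w l) \<le> P * ((\<Sum>l\<in>A. w l * (h l y / m l)) + (1 - (\<Sum>l\<in>A. w l)))"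
    if y: "y \<in> space N" for y
  proof -
    have "(\<Prod>l\<in>A. h l y powr w l) = P * (\<Prod>l\<in>A. (h l y / m l) powr w l)"
    proof -
      have "(\<Prod>l\<in>A. h l y powr w l) = (\<Prod>l\<in>A. m l powr w l * (h l y / m l) powr w l)"
      proof (intro prod.cong refl)
        fix l assume l: "l \<in> A"
        have "m l powr w l > 0" using m[OF l] a by simp
        then show "h l y powr w l = m l powr w l * (h l y / m l) powr w l"
          by (simp add: powr_divide)
      qed
      then show ?thesis by (simp add: P_def prod.distrib)
    qed
    also have "\<dots> \<le> P * ((\<Sum>l\<in>A. w l * (h l y / m l)) + (1 - (\<Sum>l\<in>A. w l)))"
      using P0 A w W hb[OF _ y] m a
      by (intro mult_left_mono amgm_slack) (auto intro!: divide_pos_pos, (meson less_le_trans)+)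
    finally show ?thesis .
  qed
  have hpm: "(\<lambda>y. \<Prod>l\<in>A. h l y powr w l) \<in> borel_measurable N"
    using hm by (intro borel_measurable_prod powr_real_measurable) auto
  have bnd: "norm (\<Prod>l\<in>A. h l y powr w l) \<le> (\<Prod>l\<in>A. b powr w l)" if y: "y \<in> space N" for y
  proof -
    have "(\<Prod>l\<in>A. h l y powr w l) \<le> (\<Prod>l\<in>A. b powr w l)"
      using hb[OF _ y] a w by (intro prod_mono) (auto intro!: powr_mono2, meson less_le_trans less_imp_le)
    then show ?thesis by (simp add: prod_nonneg)
  qed
  have int1: "integrable N (\<lambda>y. \<Prod>l\<in>A. h l y powr w l)"
    using bnd hpm by (intro integrable_const_bound AE_I2) auto
  have int2: "integrable N (\<lambda>y. P * ((\<Sum>l\<in>A. w l * (h l y / m l)) + (1 - (\<Sum>l\<in>A. w l))))"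
    using int by (intro integrable_mult_right integrable_add integrable_sum integrable_divide) auto
  have "(\<integral>y. (\<Prod>l\<in>A. h l y powr w l) \<partial>N) \<le> (\<integral>y. P * ((\<Sum>l\<in>A. w l * (h l y / m l)) + (1 - (\<Sum>l\<in>A. w l))) \<partial>N)"
    using int1 int2 pt by (intro integral_mono) auto
  also have "\<dots> = P * ((\<Sum>l\<in>A. w l * (m l / m l)) + (1 - (\<Sum>l\<in>A. w l)))"
    using int by (simp add: integral_add integral_sum integrable_sum m_def prob_space) (intro disjI2 sum.cong, auto)
  also have "\<dots> = P"
  proof -
    have "(\<Sum>l\<in>A. w l * (m l / m l)) = (\<Sum>l\<in>A. w l)"
      using m a by (intro sum.cong) (auto dest: m)
    then show ?thesis by simp
  qed
  finally show ?thesis by (simp add: P_def m_def)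
qed

lemma norm_le_of_bounds: "0 < a \<Longrightarrow> a \<le> t \<and> t \<le> b \<Longrightarrow> norm (t::real) \<le> b"
  by auto

lemma finner:
  fixes M :: "'i \<Rightarrow> 'a measure" and f :: "'l \<Rightarrow> ('i \<Rightarrow> 'a) \<Rightarrow> real" and S :: "'l \<Rightarrow> 'i set"
  assumes I: "finite I" and M: "\<And>i. i\<in>I \<Longrightarrow> prob_space (M i)" and E: "finite E"
   and fm: "\<And>l. l\<in>E \<Longrightarrow> f l \<in> borel_measurable (PiM I M)"
   and fb: "\<And>l x. l\<in>E \<Longrightarrow> x \<in> space (PiM I M) \<Longrightarrow> a \<le> f l x \<and> f l x \<le> b" and a: "0 < a"
   and w: "\<And>l. l\<in>E \<Longrightarrow> 0 \<le> w l"
   and dep: "\<And>l x u z. l\<in>E \<Longrightarrow> x \<in> space (PiM I M) \<Longrightarrow> u \<in> I \<Longrightarrow> u \<notin> S l \<Longrightarrow> z \<in> space (M u)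
               \<Longrightarrow> f l (x(u:=z)) = f l x"
   and W: "\<And>u. u \<in> I \<Longrightarrow> (\<Sum>l\<in>{l\<in>E. u \<in> S l}. w l) \<le> 1"
  shows "(\<integral>x. (\<Prod>l\<in>E. f l x powr w l) \<partial>PiM I M) \<le> (\<Prod>l\<in>E. (\<integral>x. f l x \<partial>PiM I M) powr w l)"
using I M fm fb dep W
proof (induction I arbitrary: f rule: finite_induct)
  case empty
  show ?case by (simp add: PiM_empty lebesgue_integral_count_space_finite)
next
  case (insert v J)
  let ?M = "\<lambda>i. if i \<in> insert v J then M i else count_space {undefined}"
  interpret Mi: prob_space "?M i" for i
    using insert.prems(1) by (cases "i \<in> insert v J") (auto intro!: prob_spaceI)
  interpret PS: product_prob_space ?M "insert v J" by unfold_locales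
  have PiMeq: "PiM K M = PiM K ?M" if "K \<subseteq> insert v J" for K
    using that by (intro PiM_cong) auto
  interpret Mv: prob_space "M v" using insert.prems(1) by auto
  have PJ: "prob_space (PiM J M)" using insert.prems(1) by (intro prob_space_PiM) auto
  have PvJ: "prob_space (PiM (insert v J) M)" using insert.prems(1) by (intro prob_space_PiM) auto
  interpret PJm: prob_space "PiM J M" by (rule PJ)
  interpret PvJm: prob_space "PiM (insert v J) M" by (rule PvJ)
  define f' where "f' l x = (\<integral>y. f l (x(v:=y)) \<partial>M v)" for l x
  have upd_space: "x(v:=y) \<in> space (PiM (insert v J) M)" if "x \<in> space (PiM J M)" "y \<in> space (M v)" for x y
    using that insert.hyps(2) by (auto simp: space_PiM PiE_def extensional_def Pi_iff)
  have fm2: "(\<lambda>(x,y). f l (x(v:=y))) \<in> borel_measurable (PiM J M \<Otimes>\<^sub>M M v)" if l: "l \<in> E" for l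
    using measurable_comp[OF measurable_add_dim insert.prems(2)[OF l]] by (simp add: comp_def case_prod_beta')
  have f'm: "f' l \<in> borel_measurable (PiM J M)" if l: "l \<in> E" for l
    unfolding f'_def by (rule Mv.borel_measurable_lebesgue_integral) (use fm2[OF l] in \<open>simp add: case_prod_beta'\<close>)
  have fym: "(\<lambda>y. f l (x(v:=y))) \<in> borel_measurable (M v)" if l: "l \<in> E" and x: "x \<in> space (PiM J M)" for l x
    using measurable_comp[OF measurable_component_update[OF x insert.hyps(2)] insert.prems(2)[OF l]] by (simp add: comp_def)
  have fyi: "integrable (M v) (\<lambda>y. f l (x(v:=y)))" if l: "l \<in> E" and x: "x \<in> space (PiM J M)" for l x
  proof (rule Mv.integrable_const_bound[where B=b])
    show "AE y in M v. norm (f l (x(v:=y))) \<le> b"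
      by (intro AE_I2 norm_le_of_bounds[OF a]) (use insert.prems(3)[OF l upd_space[OF x]] in blast)
  qed (rule fym[OF l x])
  have f'b: "a \<le> f' l x \<and> f' l x \<le> b" if l: "l \<in> E" and x: "x \<in> space (PiM J M)" for l x
    unfolding f'_def
    by (intro conjI Mv.integral_ge_const Mv.integral_le_const fyi[OF l x] AE_I2)
      (use insert.prems(3)[OF l upd_space[OF x]] in blast)+
  have f'dep: "f' l (x(u:=z)) = f' l x"
    if l: "l \<in> E" and x: "x \<in> space (PiM J M)" and u: "u \<in> J" "u \<notin> S l" and z: "z \<in> space (M u)" for l x u z
  proof -
    have uv: "u \<noteq> v" using u insert.hyps(2) by auto
    show ?thesis unfolding f'_def
    proof (rule Bochner_Integration.integral_cong[OF refl])
      fix y assume y: "y \<in> space (M v)"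
      have "f l ((x(u:=z))(v:=y)) = f l ((x(v:=y))(u:=z))" using uv by (simp add: fun_upd_twist)
      also have "\<dots> = f l (x(v:=y))"
        by (rule insert.prems(4)[OF l upd_space[OF x y] insertI2[OF u(1)] u(2) z])
      finally show "f l ((x(u:=z))(v:=y)) = f l (x(v:=y))" .
    qed
  qed
  have IH: "(\<integral>x. (\<Prod>l\<in>E. f' l x powr w l) \<partial>PiM J M) \<le> (\<Prod>l\<in>E. (\<integral>x. f' l x \<partial>PiM J M) powr w l)"
  proof (rule insert.IH)
    show "\<And>i. i \<in> J \<Longrightarrow> prob_space (M i)" using insert.prems(1) by simp
    show "\<And>l. l \<in> E \<Longrightarrow> f' l \<in> borel_measurable (PiM J M)" by (rule f'm)
    show "\<And>l x. l \<in> E \<Longrightarrow> x \<in> space (PiM J M) \<Longrightarrow> a \<le> f' l x \<and> f' l x \<le> b" by (rule f'b)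
    show "\<And>l x u z. l\<in>E \<Longrightarrow> x \<in> space (PiM J M) \<Longrightarrow> u \<in> J \<Longrightarrow> u \<notin> S l \<Longrightarrow> z \<in> space (M u)
               \<Longrightarrow> f' l (x(u:=z)) = f' l x" by (rule f'dep)
    show "\<And>u. u \<in> J \<Longrightarrow> (\<Sum>l\<in>{l\<in>E. u \<in> S l}. w l) \<le> 1" using insert.prems(5) by simp
  qed
  have ins: "(\<integral>x. g x \<partial>PiM (insert v J) M) = (\<integral>x. (\<integral>y. g (x(v:=y)) \<partial>M v) \<partial>PiM J M)"
    if gm: "g \<in> borel_measurable (PiM (insert v J) M)" and gb: "\<And>x. x \<in> space (PiM (insert v J) M) \<Longrightarrow> norm (g x) \<le> B"
    for g :: "('i \<Rightarrow> 'a) \<Rightarrow> real" and B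
  proof -
    have "integrable (PiM (insert v J) M) g"
      using gm gb by (intro PvJm.integrable_const_bound AE_I2) auto
    have e1: "PiM (insert v J) ?M = PiM (insert v J) M" by (rule PiMeq[symmetric]) simp
    have e2: "PiM J ?M = PiM J M" by (rule PiMeq[symmetric]) auto
    have e3: "?M v = M v" by simp
    have "integrable (PiM (insert v J) ?M) g" unfolding e1 by fact
    from PS.product_integral_insert[OF insert.hyps(1,2) this]
    show ?thesis unfolding e1 e2 e3 .
  qed
  have int_eq: "(\<integral>x. f l x \<partial>PiM (insert v J) M) = (\<integral>x. f' l x \<partial>PiM J M)" if l: "l \<in> E" for l
    unfolding f'_def
  proof (rule ins[of "f l" b, OF insert.prems(2)[OF l]])
    fix x assume "x \<in> space (PiM (insert v J) M)"
    then show "norm (f l x) \<le> b" using insert.prems(3)[OF l] by (intro norm_le_of_bounds[OF a]) simp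
  qed
  define G where "G x = (\<Prod>l\<in>E. f l x powr w l)" for x
  define C where "C = (\<Prod>l\<in>E. b powr w l)"
  have Gm: "G \<in> borel_measurable (PiM (insert v J) M)"
    unfolding G_def using insert.prems(2) by (intro borel_measurable_prod powr_real_measurable) auto
  have Gb: "0 \<le> G x \<and> G x \<le> C" if x: "x \<in> space (PiM (insert v J) M)" for x
    unfolding G_def C_def using insert.prems(3)[OF _ x] a w
    by (auto intro!: prod_nonneg prod_mono powr_mono2, (meson less_le_trans less_imp_le)+)
  have step1: "(\<integral>x. G x \<partial>PiM (insert v J) M) = (\<integral>x. (\<integral>y. G (x(v:=y)) \<partial>M v) \<partial>PiM J M)"
    by (rule ins[of G C, OF Gm]) (use Gb in auto)
  define A where "A = {l\<in>E. v \<in> S l}"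
  have AsubE: "A \<subseteq> E" by (auto simp: A_def)
  have pt: "(\<integral>y. G (x(v:=y)) \<partial>M v) \<le> (\<Prod>l\<in>E. f' l x powr w l)" if x: "x \<in> space (PiM J M)" for x
  proof -
    have Bc: "f l (x(v:=y)) = f' l x" if l: "l \<in> E - A" and y: "y \<in> space (M v)" for l y
    proof -
      have lE: "l \<in> E" and vS: "v \<notin> S l" using l by (auto simp: A_def)
      have "f' l x = (\<integral>y'. f l (x(v:=y)) \<partial>M v)"
        unfolding f'_def
      proof (rule Bochner_Integration.integral_cong[OF refl])
        fix y' assume y': "y' \<in> space (M v)"
        have "f l ((x(v:=y))(v:=y')) = f l (x(v:=y))"
          using insert.prems(4)[OF lE upd_space[OF x y] insertI1 vS y'] .
        then show "f l (x(v:=y')) = f l (x(v:=y))" by simp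
      qed
      also have "\<dots> = f l (x(v:=y))" using Mv.prob_space by simp
      finally show ?thesis by simp
    qed
    have "(\<integral>y. G (x(v:=y)) \<partial>M v) = (\<integral>y. (\<Prod>l\<in>E - A. f' l x powr w l) * (\<Prod>l\<in>A. f l (x(v:=y)) powr w l) \<partial>M v)"
    proof (rule Bochner_Integration.integral_cong[OF refl])
      fix y assume y: "y \<in> space (M v)"
      have "G (x(v:=y)) = (\<Prod>l\<in>E - A. f l (x(v:=y)) powr w l) * (\<Prod>l\<in>A. f l (x(v:=y)) powr w l)"
        unfolding G_def using AsubE E by (rule prod.subset_diff)
      also have "(\<Prod>l\<in>E - A. f l (x(v:=y)) powr w l) = (\<Prod>l\<in>E - A. f' l x powr w l)"
        using Bc y by (intro prod.cong) auto
      finally show "G (x(v:=y)) = (\<Prod>l\<in>E - A. f' l x powr w l) * (\<Prod>l\<in>A. f l (x(v:=y)) powr w l)" .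
    qed
    also have "\<dots> = (\<Prod>l\<in>E - A. f' l x powr w l) * (\<integral>y. (\<Prod>l\<in>A. f l (x(v:=y)) powr w l) \<partial>M v)"
      by simp
    also have "\<dots> \<le> (\<Prod>l\<in>E - A. f' l x powr w l) * (\<Prod>l\<in>A. (\<integral>y. f l (x(v:=y)) \<partial>M v) powr w l)"
    proof (intro mult_left_mono prod_nonneg)
      show "(\<integral>y. (\<Prod>l\<in>A. f l (x(v:=y)) powr w l) \<partial>M v) \<le> (\<Prod>l\<in>A. (\<integral>y. f l (x(v:=y)) \<partial>M v) powr w l)"
      proof (rule holder_family[OF Mv.prob_space_axioms, where a=a and b=b and h="\<lambda>l y. f l (x(v:=y))"])
        show "finite A" using AsubE E by (rule finite_subset)
        show "\<And>l. l\<in>A \<Longrightarrow> (\<lambda>y. f l (x(v:=y))) \<in> borel_measurable (M v)" using fym x AsubE by blast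
        have fbx: "\<And>l y. l\<in>E \<Longrightarrow> y \<in> space (M v) \<Longrightarrow> a \<le> f l (x(v:=y)) \<and> f l (x(v:=y)) \<le> b"
          using insert.prems(3) upd_space[OF x] by blast
        show "\<And>l y. l\<in>A \<Longrightarrow> y \<in> space (M v) \<Longrightarrow> a \<le> f l (x(v:=y)) \<and> f l (x(v:=y)) \<le> b"
          using fbx AsubE by blast
        show "0 < a" by (rule a)
        show "\<And>l. l\<in>A \<Longrightarrow> 0 \<le> w l" using w AsubE by blast
        show "(\<Sum>l\<in>A. w l) \<le> 1" using insert.prems(5)[of v] by (simp add: A_def)
      qed
    qed auto
    also have "\<dots> = (\<Prod>l\<in>E. f' l x powr w l)"
      using prod.subset_diff[OF AsubE E, of "\<lambda>l. f' l x powr w l"] by (simp add: f'_def)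
    finally show ?thesis .
  qed
  have "(\<integral>x. G x \<partial>PiM (insert v J) M) \<le> (\<integral>x. (\<Prod>l\<in>E. f' l x powr w l) \<partial>PiM J M)"
    unfolding step1
  proof (rule integral_mono[OF _ _ pt])
    have "(\<lambda>(x,y). G (x(v:=y))) \<in> borel_measurable (PiM J M \<Otimes>\<^sub>M M v)"
      using measurable_comp[OF measurable_add_dim Gm] by (simp add: comp_def case_prod_beta')
    then have m: "(\<lambda>x. \<integral>y. G (x(v:=y)) \<partial>M v) \<in> borel_measurable (PiM J M)"
      by (intro Mv.borel_measurable_lebesgue_integral) (simp add: case_prod_beta')
    show "integrable (PiM J M) (\<lambda>x. \<integral>y. G (x(v:=y)) \<partial>M v)"
    proof (rule PJm.integrable_const_bound[where B=C, OF _ m], intro AE_I2)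
      fix x assume x: "x \<in> space (PiM J M)"
      have "0 \<le> (\<integral>y. G (x(v:=y)) \<partial>M v)" by (rule Bochner_Integration.integral_nonneg) (use Gb upd_space[OF x] in blast)
      moreover have "(\<integral>y. G (x(v:=y)) \<partial>M v) \<le> C"
      proof (rule Mv.integral_le_const[OF _ AE_I2])
        show "integrable (M v) (\<lambda>y. G (x(v:=y)))"
          using measurable_comp[OF measurable_component_update[OF x insert.hyps(2)] Gm] Gb upd_space[OF x]
          by (intro Mv.integrable_const_bound[where B=C] AE_I2) (auto simp: comp_def)
      qed (use Gb upd_space[OF x] in auto)
      ultimately show "norm (\<integral>y. G (x(v:=y)) \<partial>M v) \<le> C" by simp
    qed
    show "integrable (PiM J M) (\<lambda>x. \<Prod>l\<in>E. f' l x powr w l)"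
    proof (rule PJm.integrable_const_bound[where B=C, OF AE_I2])
      fix x assume x: "x \<in> space (PiM J M)"
      have "(\<Prod>l\<in>E. f' l x powr w l) \<le> C"
        unfolding C_def using f'b[OF _ x] a w
        by (auto intro!: prod_nonneg prod_mono powr_mono2, (meson less_le_trans less_imp_le)+)
      then show "norm (\<Prod>l\<in>E. f' l x powr w l) \<le> C" by (simp add: prod_nonneg)
    next
      show "(\<lambda>x. \<Prod>l\<in>E. f' l x powr w l) \<in> borel_measurable (PiM J M)"
        using f'm by (intro borel_measurable_prod powr_real_measurable) auto
    qed
  qed
  also have "\<dots> \<le> (\<Prod>l\<in>E. (\<integral>x. f' l x \<partial>PiM J M) powr w l)" by (rule IH)
  also have "\<dots> = (\<Prod>l\<in>E. (\<integral>x. f l x \<partial>PiM (insert v J) M) powr w l)"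
    using int_eq by (intro prod.cong) auto
  finally show ?case by (simp add: G_def)
qed



lemma measurable_PiM_kernel:
  fixes F :: "'i \<Rightarrow> 'b \<Rightarrow> 'a measure"
  assumes I: "finite I" and F: "\<And>i. i \<in> I \<Longrightarrow> F i \<in> L \<rightarrow>\<^sub>M prob_algebra (N i)"
  shows "(\<lambda>x. PiM I (\<lambda>i. F i x)) \<in> L \<rightarrow>\<^sub>M prob_algebra (PiM I N)"
proof (rule measurable_prob_algebra_generated[OF sets_PiM Int_stable_prod_algebra prod_algebra_sets_into_space])
  have Fa: "prob_space (F i a) \<and> sets (F i a) = sets (N i)" if "a \<in> space L" "i \<in> I" for a i
    using measurable_space[OF F[OF that(2)] that(1)] by (auto simp: space_prob_algebra)
  fix a assume a: "a \<in> space L"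
  show "prob_space (PiM I (\<lambda>i. F i a))" using Fa[OF a] by (intro prob_space_PiM) auto
  show "sets (PiM I (\<lambda>i. F i a)) = sets (PiM I N)" using Fa[OF a] by (intro sets_PiM_cong) auto
next
  have Fa: "prob_space (F i a) \<and> sets (F i a) = sets (N i)" if "a \<in> space L" "i \<in> I" for a i
    using measurable_space[OF F[OF that(2)] that(1)] by (auto simp: space_prob_algebra)
  fix A assume "A \<in> prod_algebra I N"
  then obtain J E where A: "A = prod_emb I N J (\<Pi>\<^sub>E j\<in>J. E j)" and J: "finite J" "J \<subseteq> I"
    and E: "\<And>i. i \<in> J \<Longrightarrow> E i \<in> sets (N i)"
    by (rule prod_algebraE) blast
  have eq: "emeasure (PiM I (\<lambda>i. F i a)) A = (\<Prod>j\<in>J. emeasure (F j a) (E j))" if a: "a \<in> space L" for a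
  proof -
    have sp: "space (F i a) = space (N i)" if "i \<in> I" for i
      using Fa[OF a that] by (intro sets_eq_imp_space_eq) auto
    have "A = prod_emb I (\<lambda>i. F i a) J (\<Pi>\<^sub>E j\<in>J. E j)"
      unfolding A prod_emb_def using sp by (auto simp: PiE_def Pi_iff)
    also have "emeasure (PiM I (\<lambda>i. F i a)) \<dots> = (\<Prod>j\<in>J. emeasure (F j a) (E j))"
      using Fa[OF a] J E by (intro emeasure_PiM_emb) auto
    finally show ?thesis by simp
  qed
  have "(\<lambda>a. \<Prod>j\<in>J. emeasure (F j a) (E j)) \<in> borel_measurable L"
  proof (intro borel_measurable_prod_ennreal)
    fix j assume j: "j \<in> J"
    show "(\<lambda>a. emeasure (F j a) (E j)) \<in> borel_measurable L"
      by (rule measurable_compose[OF measurable_prob_algebraD[OF F[OF subsetD[OF J(2) j]]] measurable_emeasure_subprob_algebra[OF E[OF j]]])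
  qed
  then show "(\<lambda>a. emeasure (PiM I (\<lambda>i. F i a)) A) \<in> borel_measurable L"
    using eq by (subst measurable_cong) auto
qed



lemma fact_ge_2_3pow: "2 * 3 ^ n \<le> (fact (n + 2) :: real)"
proof (induction n)
  case 0 then show ?case by simp
next
  case (Suc n)
  have "fact (Suc n + 2) = real (n + 3) * fact (n + 2)"
    by (simp add: algebra_simps)
  moreover have "3 * (2 * 3 ^ n) \<le> real (n + 3) * fact (n + 2)"
    using Suc by (intro mult_mono) auto
  ultimately show ?case by (simp add: ac_simps)
qed

lemma exp_bernstein_pt:
  fixes x c :: real
  assumes xc: "\<bar>x\<bar> \<le> c" and c3: "c < 3"
  shows "exp x \<le> 1 + x + x\<^sup>2 / (2 * (1 - c / 3))"
proof -
  have c0: "0 \<le> c" using xc by simp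
  have q: "norm (c / 3) < 1" using c0 c3 by simp
  have s1: "summable (\<lambda>n. inverse (fact (n + 2)) * x ^ (n + 2))"
    using summable_ignore_initial_segment[OF summable_exp[of x], of 2] by simp
  have s2: "summable (\<lambda>n. x\<^sup>2 / 2 * (c / 3) ^ n)"
    using summable_geometric[OF q] by (rule summable_mult)
  have le: "inverse (fact (n + 2)) * x ^ (n + 2) \<le> x\<^sup>2 / 2 * (c / 3) ^ n" for n
  proof -
    have xx: "x ^ (n + 2) \<le> \<bar>x\<bar> ^ (n + 2)" by (metis abs_ge_self power_abs)
    have "inverse (fact (n + 2)) * x ^ (n + 2) = x ^ (n + 2) / fact (n + 2)"
      by (simp add: divide_inverse mult.commute)
    also have "\<dots> \<le> \<bar>x\<bar> ^ (n + 2) / fact (n + 2)"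
      using xx by (rule divide_right_mono) simp
    also have "\<dots> = x\<^sup>2 * \<bar>x\<bar> ^ n / fact (n + 2)"
      by (simp add: power_add power2_abs mult.commute power2_eq_square)
    also have "\<dots> \<le> x\<^sup>2 * c ^ n / (2 * 3 ^ n)"
      using fact_ge_2_3pow[of n] xc
      by (intro frac_le mult_left_mono power_mono) auto
    also have "\<dots> = x\<^sup>2 / 2 * (c / 3) ^ n"
      by (simp add: power_divide)
    finally show ?thesis .
  qed
  have "(\<Sum>n. inverse (fact (n + 2)) * x ^ (n + 2)) \<le> (\<Sum>n. x\<^sup>2 / 2 * (c / 3) ^ n)"
    using s1 s2 le by (intro suminf_le) auto
  also have "\<dots> = x\<^sup>2 / 2 * (\<Sum>n. (c / 3) ^ n)"
    by (rule suminf_mult[OF summable_geometric[OF q]])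
  also have "\<dots> = x\<^sup>2 / 2 * (1 / (1 - c / 3))"
    by (simp only: suminf_geometric[OF q])
  also have "\<dots> = x\<^sup>2 / (2 * (1 - c / 3))" by simp
  finally show ?thesis
    using exp_first_two_terms[of x] by simp
qed


lemma jensen_powr_AE:
  fixes f :: "'a \<Rightarrow> real"
  assumes N: "prob_space N" and fm: "f \<in> borel_measurable N"
    and fb: "AE y in N. a \<le> f y \<and> f y \<le> b" and a: "0 < a" and w: "0 \<le> w" "w \<le> 1"
  shows "(\<integral>y. f y powr w \<partial>N) \<le> (\<integral>y. f y \<partial>N) powr w"
proof -
  interpret prob_space N by fact
  have "AE y in N. a \<le> b" using fb by eventually_elim auto
  then have ab: "a \<le> b" by simp
  define h where "h y = max a (min b (f y))" for y
  have hm: "h \<in> borel_measurable N" unfolding h_def using fm by measurable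
  have hb: "a \<le> h y \<and> h y \<le> b" for y using ab by (auto simp: h_def)
  have fh: "AE y in N. f y = h y" using fb by eventually_elim (auto simp: h_def)
  have "(\<integral>y. (\<Prod>l\<in>{()}. h y powr w) \<partial>N) \<le> (\<Prod>l\<in>{()}. (\<integral>y. h y \<partial>N) powr w)"
    using hm hb a w by (intro holder_family[OF N, where a=a and b=b]) auto
  then have "(\<integral>y. h y powr w \<partial>N) \<le> (\<integral>y. h y \<partial>N) powr w" by simp
  moreover have "(\<integral>y. f y powr w \<partial>N) = (\<integral>y. h y powr w \<partial>N)"
    using fm hm fh by (intro integral_cong_AE) auto
  moreover have "(\<integral>y. f y \<partial>N) = (\<integral>y. h y \<partial>N)"
    using fm hm fh by (intro integral_cong_AE) auto
  ultimately show ?thesis by simp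
qed



lemma nn_integral_PiM_prod:
  fixes f :: "'i \<Rightarrow> 'a \<Rightarrow> ennreal"
  assumes I: "finite I" and M: "\<And>i. i \<in> I \<Longrightarrow> prob_space (M i)"
    and f: "\<And>i. i \<in> I \<Longrightarrow> f i \<in> borel_measurable (M i)"
  shows "(\<integral>\<^sup>+x. (\<Prod>i\<in>I. f i (x i)) \<partial>PiM I M) = (\<Prod>i\<in>I. \<integral>\<^sup>+x. f i x \<partial>M i)"
proof -
  let ?M = "\<lambda>i. if i \<in> I then M i else count_space {undefined}"
  interpret Mi: prob_space "?M i" for i
    using M by (cases "i \<in> I") (auto intro!: prob_spaceI)
  interpret PS: product_prob_space ?M I by unfold_locales
  have e: "PiM I M = PiM I ?M" by (intro PiM_cong) auto
  have "(\<integral>\<^sup>+x. (\<Prod>i\<in>I. f i (x i)) \<partial>PiM I ?M) = (\<Prod>i\<in>I. \<integral>\<^sup>+x. f i x \<partial>?M i)"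
    using f by (intro PS.product_nn_integral_prod I) auto
  also have "\<dots> = (\<Prod>i\<in>I. \<integral>\<^sup>+x. f i x \<partial>M i)" by (intro prod.cong) auto
  finally show ?thesis by (simp add: e)
qed

lemma abs_twz_le:
  fixes t w z M :: real
  assumes "0 \<le> t" "0 \<le> w" "w \<le> 1" "\<bar>z\<bar> \<le> M"
  shows "\<bar>t * w * z\<bar> \<le> t * M"
proof -
  have M: "0 \<le> M" using assms(4) by linarith
  have "\<bar>t * w * z\<bar> = t * (w * \<bar>z\<bar>)" using assms by (simp add: abs_mult)
  also have "w * \<bar>z\<bar> \<le> 1 * M" using assms M by (intro mult_mono) auto
  then have "t * (w * \<bar>z\<bar>) \<le> t * M" using assms(1) by (simp add: mult_left_mono)
  finally show ?thesis .
qed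

lemma chernoff_core:
  fixes k n :: nat and e :: "nat \<Rightarrow> nat \<Rightarrow> 'v"
    and \<rho> :: "nat \<Rightarrow> 'x measure" and K :: "(nat \<Rightarrow> 'x) \<Rightarrow> real measure"
    and \<xi> :: "(nat \<Rightarrow> 'x) \<times> real \<Rightarrow> real"
    and w :: "nat \<Rightarrow> real" and \<mu> \<sigma> M \<epsilon> t :: real
  assumes k1: "k \<ge> 1"
    and rho: "\<And>j. j < k \<Longrightarrow> prob_space (\<rho> j)"
    and Km: "K \<in> measurable (PiM {..<k} \<rho>) (prob_algebra borel)"
    and xim: "\<xi> \<in> borel_measurable (PiM {..<k} \<rho> \<Otimes>\<^sub>M borel)"
    and mu: "\<mu> = (\<integral>z. \<xi> z \<partial>data_dist k \<rho> K)"
    and sig: "\<sigma>\<^sup>2 = (\<integral>z. (\<xi> z - \<mu>)\<^sup>2 \<partial>data_dist k \<rho> K)"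
    and bnd: "AE z in data_dist k \<rho> K. \<bar>\<xi> z - \<mu>\<bar> \<le> M"
    and opt: "optimal_weighting k n e w"
    and t0: "0 \<le> t" and tM: "t * M < 3"
  shows "measure (networked_sample k n e \<rho> K)
           {\<omega> \<in> space (networked_sample k n e \<rho> K).
              (\<Sum>i<n. w i * (\<xi> (edge_feat k e (fst \<omega>) i, snd \<omega> i) - \<mu>)) \<ge> \<epsilon>}
         \<le> exp (- t * \<epsilon> + s_value k n e * (t\<^sup>2 * \<sigma>\<^sup>2 / (2 * (1 - t * M / 3))))"
proof -
  define PX where "PX = PiM {..<k} \<rho>"
  define V where "V = hg_vertices k n e"
  define FM where "FM = PiM V (\<lambda>v. \<rho> (fst v))"
  define B where "B = PiM {..<n} (\<lambda>_::nat. (borel :: real measure))"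
  define P where "P \<phi> = PiM {..<n} (\<lambda>i. K (edge_feat k e \<phi> i))" for \<phi>
  define \<kappa> where "\<kappa> \<phi> = distr (P \<phi>) (FM \<Otimes>\<^sub>M B) (\<lambda>ys. (\<phi>, ys))" for \<phi>
  define KD where "KD x = distr (K x) (PX \<Otimes>\<^sub>M borel) (\<lambda>y. (x, y))" for x
  define X where "X z = \<xi> z - \<mu>" for z
  define s where "s = s_value k n e"
  define NS where "NS = networked_sample k n e \<rho> K"
  define D where "D = data_dist k \<rho> K"
  define c where "c = t * M"
  have NS: "NS = FM \<bind> \<kappa>"
    unfolding NS_def networked_sample_def Let_def FM_def V_def \<kappa>_def P_def B_def by simp
  have D: "D = PX \<bind> KD"
    unfolding D_def data_dist_def PX_def KD_def by simp
  have feas: "feasible_weighting k n e w" and s: "s = (\<Sum>i<n. w i)"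
    using opt unfolding optimal_weighting_def s_def by auto
  have w0: "0 \<le> w i" if "i < n" for i using feas that unfolding feasible_weighting_def by auto
  have w1: "w i \<le> 1" if i: "i < n" for i
  proof -
    have "w i \<le> (\<Sum>i' | i' < n \<and> e i' 0 = e i 0. w i')"
      using i w0 by (intro member_le_sum) auto
    also have "\<dots> \<le> 1" using feas k1 unfolding feasible_weighting_def by auto
    finally show ?thesis .
  qed
  have s0: "0 \<le> s" unfolding s using w0 by (intro sum_nonneg) auto
  have PX: "prob_space PX" unfolding PX_def using rho by (intro prob_space_PiM) auto
  have inV: "(j, e i j) \<in> V" if "i < n" "j < k" for i j
    using that unfolding V_def hg_vertices_def by auto
  have Vsub: "V \<subseteq> (\<lambda>(i,j). (j, e i j)) ` ({..<n} \<times> {..<k})"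
    unfolding V_def hg_vertices_def by auto
  have Vfin: "finite V" by (rule finite_subset[OF Vsub]) auto
  have Vfst: "fst v < k" if "v \<in> V" for v using that unfolding V_def hg_vertices_def by auto
  have FMp: "prob_space FM" unfolding FM_def using rho Vfst by (intro prob_space_PiM) auto
  have efm: "(\<lambda>\<phi>. edge_feat k e \<phi> i) \<in> FM \<rightarrow>\<^sub>M PX" if i: "i < n" for i
    unfolding edge_feat_def PX_def FM_def
  proof (rule measurable_restrict)
    fix j assume j: "j \<in> {..<k}"
    show "(\<lambda>\<phi>. \<phi> (j, e i j)) \<in> PiM V (\<lambda>v. \<rho> (fst v)) \<rightarrow>\<^sub>M \<rho> j"
      using measurable_component_singleton[OF inV[OF i j[simplified]], of "\<lambda>v. \<rho> (fst v)"] by simp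
  qed
  have efd: "distr FM PX (\<lambda>\<phi>. edge_feat k e \<phi> i) = PX" if i: "i < n" for i
  proof -
    have "distr (PiM V (\<lambda>v. \<rho> (fst v))) (\<Pi>\<^sub>M j\<in>{..<k}. (\<lambda>v. \<rho> (fst v)) ((\<lambda>j. (j, e i j)) j))
            (\<lambda>\<omega>. \<lambda>j\<in>{..<k}. \<omega> ((\<lambda>j. (j, e i j)) j)) = (\<Pi>\<^sub>M j\<in>{..<k}. (\<lambda>v. \<rho> (fst v)) ((\<lambda>j. (j, e i j)) j))"
      using rho Vfst inV[OF i] by (intro distr_PiM_reindex) (auto simp: inj_on_def)
    then show ?thesis unfolding FM_def PX_def edge_feat_def by simp
  qed
  have Kx: "prob_space (K x) \<and> sets (K x) = sets borel" if "x \<in> space PX" for x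
    using measurable_space[OF Km, of x] that unfolding PX_def by (auto simp: space_prob_algebra)
  have Kef: "(\<lambda>\<phi>. K (edge_feat k e \<phi> i)) \<in> FM \<rightarrow>\<^sub>M prob_algebra borel" if i: "i < n" for i
    using measurable_compose[OF efm[OF i] Km[folded PX_def]] .
  have Pm: "P \<in> FM \<rightarrow>\<^sub>M prob_algebra B"
    unfolding P_def B_def using Kef
    by (intro measurable_PiM_kernel[where F="\<lambda>i \<phi>. K (edge_feat k e \<phi> i)", simplified]) auto
  have \<kappa>m: "\<kappa> \<in> FM \<rightarrow>\<^sub>M prob_algebra (FM \<Otimes>\<^sub>M B)"
    unfolding \<kappa>_def by (rule measurable_distr_prob_space2[OF Pm]) simp
  have KDm: "KD \<in> PX \<rightarrow>\<^sub>M prob_algebra (PX \<Otimes>\<^sub>M borel)"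
    unfolding KD_def by (rule measurable_distr_prob_space2[OF Km[folded PX_def]]) simp
  have NSp: "prob_space NS"
    unfolding NS using FMp \<kappa>m by (intro prob_space_bind'[of FM FM]) (auto simp: space_prob_algebra)
  have sNS: "sets NS = sets (FM \<Otimes>\<^sub>M B)"
    unfolding NS using FMp \<kappa>m by (intro sets_bind'[of FM FM]) (auto simp: space_prob_algebra)
  have Dp: "prob_space D"
    unfolding D using PX KDm by (intro prob_space_bind'[of PX PX]) (auto simp: space_prob_algebra)
  have sD: "sets D = sets (PX \<Otimes>\<^sub>M borel)"
    unfolding D using PX KDm by (intro sets_bind'[of PX PX]) (auto simp: space_prob_algebra)
  have Xm: "X \<in> borel_measurable (PX \<Otimes>\<^sub>M borel)" unfolding X_def PX_def using xim by measurable
  have XmD: "X \<in> borel_measurable D" using Xm sD by (simp cong: measurable_cong_sets)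
  have Xy: "(\<lambda>y. X (x, y)) \<in> borel_measurable (K x)" if x: "x \<in> space PX" for x
    using measurable_Pair2[OF Xm x] Kx[OF x] by (simp cong: measurable_cong_sets)
  define S where "S \<omega> = (\<Sum>i<n. w i * X (edge_feat k e (fst \<omega>) i, snd \<omega> i))" for \<omega>
  have Bc: "(\<lambda>ys. ys i) \<in> B \<rightarrow>\<^sub>M borel" if "i < n" for i
    unfolding B_def using that by (intro measurable_component_singleton) auto
  have Sm: "S \<in> borel_measurable (FM \<Otimes>\<^sub>M B)"
  proof -
    have "(\<lambda>\<omega>. X (edge_feat k e (fst \<omega>) i, snd \<omega> i)) \<in> borel_measurable (FM \<Otimes>\<^sub>M B)" if i: "i < n" for i
    proof (rule measurable_compose[OF _ Xm])
      show "(\<lambda>\<omega>. (edge_feat k e (fst \<omega>) i, snd \<omega> i)) \<in> FM \<Otimes>\<^sub>M B \<rightarrow>\<^sub>M PX \<Otimes>\<^sub>M borel"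
        by (intro measurable_Pair measurable_compose[OF measurable_fst efm[OF i]]
                  measurable_compose[OF measurable_snd Bc[OF i]])
    qed
    then show ?thesis unfolding S_def by (intro borel_measurable_sum borel_measurable_times) auto
  qed
  define A where "A = {\<omega> \<in> space NS. \<epsilon> \<le> S \<omega>}"
  have A: "A \<in> sets NS"
  proof -
    have "Measurable.pred NS (\<lambda>\<omega>. \<epsilon> \<le> S \<omega>)" using Sm sNS by (simp cong: measurable_cong_sets)
    then show ?thesis unfolding A_def by measurable
  qed
  have SmNS: "S \<in> borel_measurable NS" using Sm sNS by (simp cong: measurable_cong_sets)
  have markov: "emeasure NS A \<le> ennreal (exp (- t * \<epsilon>)) * (\<integral>\<^sup>+\<omega>. ennreal (exp (t * S \<omega>)) \<partial>NS)"
  proof -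
    have "emeasure NS A = (\<integral>\<^sup>+\<omega>. indicator A \<omega> \<partial>NS)" using A by simp
    also have "\<dots> \<le> (\<integral>\<^sup>+\<omega>. ennreal (exp (- t * \<epsilon>)) * ennreal (exp (t * S \<omega>)) \<partial>NS)"
    proof (rule nn_integral_mono)
      fix \<omega> assume "\<omega> \<in> space NS"
      show "indicator A \<omega> \<le> ennreal (exp (- t * \<epsilon>)) * ennreal (exp (t * S \<omega>))"
      proof (cases "\<omega> \<in> A")
        case True
        then have "\<epsilon> \<le> S \<omega>" unfolding A_def by auto
        then have "0 \<le> - t * \<epsilon> + t * S \<omega>" using t0
          by (metis add.commute diff_ge_0_iff_ge mult_left_mono mult_minus_left uminus_add_conv_diff)
        then have "1 \<le> exp (- t * \<epsilon>) * exp (t * S \<omega>)" by (simp add: exp_add[symmetric])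
        then have "1 \<le> ennreal (exp (- t * \<epsilon>) * exp (t * S \<omega>))" by (simp add: ennreal_ge_1)
        then show ?thesis using True by (simp add: ennreal_mult)
      qed simp
    qed
    also have "\<dots> = ennreal (exp (- t * \<epsilon>)) * (\<integral>\<^sup>+\<omega>. ennreal (exp (t * S \<omega>)) \<partial>NS)"
      using SmNS by (intro nn_integral_cmult) measurable
    finally show ?thesis .
  qed
  have mgf_split: "(\<integral>\<^sup>+\<omega>. ennreal (exp (t * S \<omega>)) \<partial>NS) =
      (\<integral>\<^sup>+\<phi>. (\<Prod>i<n. \<integral>\<^sup>+y. ennreal (exp (t * w i * X (edge_feat k e \<phi> i, y))) \<partial>K (edge_feat k e \<phi> i)) \<partial>FM)"
  proof -
    have "(\<integral>\<^sup>+\<omega>. ennreal (exp (t * S \<omega>)) \<partial>NS) = (\<integral>\<^sup>+\<phi>. \<integral>\<^sup>+\<omega>. ennreal (exp (t * S \<omega>)) \<partial>\<kappa> \<phi> \<partial>FM)"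
      unfolding NS using Sm by (intro nn_integral_bind[OF _ measurable_prob_algebraD[OF \<kappa>m]]) measurable
    also have "\<dots> = (\<integral>\<^sup>+\<phi>. (\<Prod>i<n. \<integral>\<^sup>+y. ennreal (exp (t * w i * X (edge_feat k e \<phi> i, y))) \<partial>K (edge_feat k e \<phi> i)) \<partial>FM)"
    proof (rule nn_integral_cong)
      fix \<phi> assume \<phi>: "\<phi> \<in> space FM"
      have Pphi: "sets (P \<phi>) = sets B" "prob_space (P \<phi>)"
        using measurable_space[OF Pm \<phi>] by (auto simp: space_prob_algebra)
      have ef: "edge_feat k e \<phi> i \<in> space PX" if "i < n" for i
        using measurable_space[OF efm[OF that] \<phi>] .
      have T: "(\<lambda>ys. (\<phi>, ys)) \<in> P \<phi> \<rightarrow>\<^sub>M FM \<Otimes>\<^sub>M B"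
        using measurable_Pair1'[OF \<phi>, of B] Pphi(1) by (simp cong: measurable_cong_sets)
      have "(\<integral>\<^sup>+\<omega>. ennreal (exp (t * S \<omega>)) \<partial>\<kappa> \<phi>) = (\<integral>\<^sup>+ys. ennreal (exp (t * S (\<phi>, ys))) \<partial>P \<phi>)"
        unfolding \<kappa>_def using Sm by (intro nn_integral_distr[OF T]) measurable
      also have "\<dots> = (\<integral>\<^sup>+ys. (\<Prod>i<n. ennreal (exp (t * w i * X (edge_feat k e \<phi> i, ys i)))) \<partial>P \<phi>)"
      proof (rule nn_integral_cong)
        fix ys
        have "exp (t * S (\<phi>, ys)) = (\<Prod>i<n. exp (t * w i * X (edge_feat k e \<phi> i, ys i)))"
          unfolding S_def by (simp add: sum_distrib_left exp_sum mult.assoc)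
        then show "ennreal (exp (t * S (\<phi>, ys))) = (\<Prod>i<n. ennreal (exp (t * w i * X (edge_feat k e \<phi> i, ys i))))"
          by (simp add: prod_ennreal)
      qed
      also have "\<dots> = (\<Prod>i<n. \<integral>\<^sup>+y. ennreal (exp (t * w i * X (edge_feat k e \<phi> i, y))) \<partial>K (edge_feat k e \<phi> i))"
        unfolding P_def
      proof (rule nn_integral_PiM_prod)
        fix i assume "i \<in> {..<n}"
        then have i: "i < n" by simp
        show "prob_space (K (edge_feat k e \<phi> i))" using Kx[OF ef[OF i]] by auto
        show "(\<lambda>y. ennreal (exp (t * w i * X (edge_feat k e \<phi> i, y)))) \<in> borel_measurable (K (edge_feat k e \<phi> i))"
          using Xy[OF ef[OF i]] by measurable
      qed simp
      finally show "(\<integral>\<^sup>+\<omega>. ennreal (exp (t * S \<omega>)) \<partial>\<kappa> \<phi>) = (\<Prod>i<n. \<integral>\<^sup>+y. ennreal (exp (t * w i * X (edge_feat k e \<phi> i, y))) \<partial>K (edge_feat k e \<phi> i))" .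
    qed
    finally show ?thesis .
  qed
  define Gr where "Gr x = enn2real (\<integral>\<^sup>+y. ennreal (exp (t * X (x, y))) \<partial>K x)" for x
  define g where "g x = max (exp (- c)) (min (exp c) (Gr x))" for x
  define Gd where "Gd x \<longleftrightarrow> (AE y in K x. \<bar>X (x, y)\<bar> \<le> M)" for x
  have bndD: "AE z in D. \<bar>X z\<bar> \<le> M" using bnd unfolding D_def X_def .
  have M0: "0 \<le> M"
  proof -
    have "AE z in D. 0 \<le> M" using bndD by eventually_elim auto
    then show ?thesis using prob_space.AE_const[OF Dp] by simp
  qed
  have c0: "0 \<le> c" unfolding c_def using t0 M0 by simp
  have AEGd: "AE x in PX. Gd x"
  proof -
    have pm: "Measurable.pred (PX \<Otimes>\<^sub>M borel) (\<lambda>z. \<bar>X z\<bar> \<le> M)" using Xm by measurable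
    have "AE x in PX. AE z in KD x. \<bar>X z\<bar> \<le> M"
      using bndD unfolding D by (subst (asm) AE_bind[OF measurable_prob_algebraD[OF KDm] pm])
    then show ?thesis using AE_space
    proof eventually_elim
      case (elim x)
      have T: "(\<lambda>y. (x, y)) \<in> K x \<rightarrow>\<^sub>M PX \<Otimes>\<^sub>M borel"
        using measurable_Pair1'[OF elim(2), of borel] Kx[OF elim(2)] by (simp cong: measurable_cong_sets)
      show ?case using AE_distrD[OF T elim(1)[unfolded KD_def]] unfolding Gd_def by simp
    qed
  qed
  have Grm: "Gr \<in> borel_measurable PX"
  proof -
    have "(\<lambda>x. \<integral>\<^sup>+y. ennreal (exp (t * X (x, y))) \<partial>K x) \<in> borel_measurable PX"
      using Xm by (intro nn_integral_measurable_subprob_algebra2[OF _ measurable_prob_algebraD[OF Km[folded PX_def]]]) (simp add: case_prod_beta)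
    then show ?thesis unfolding Gr_def by measurable
  qed
  have gm: "g \<in> borel_measurable PX" unfolding g_def using Grm by measurable
  have gb: "exp (- c) \<le> g x \<and> g x \<le> exp c" for x
    using c0 unfolding g_def by auto
  have Hle: "(\<integral>\<^sup>+y. ennreal (exp (t * w i * X (x, y))) \<partial>K x) = ennreal (\<integral>y. exp (t * w i * X (x, y)) \<partial>K x)
       \<and> (\<integral>y. exp (t * w i * X (x, y)) \<partial>K x) \<le> g x powr w i"
    if x: "x \<in> space PX" "Gd x" and i: "i < n" for x i
  proof -
    interpret Kp: prob_space "K x" using Kx[OF x(1)] by auto
    have ae: "AE y in K x. \<bar>X (x, y)\<bar> \<le> M" using x(2) unfolding Gd_def .
    have Xym: "(\<lambda>y. X (x, y)) \<in> borel_measurable (K x)" by (rule Xy[OF x(1)])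
    have int: "integrable (K x) (\<lambda>y. exp (t * v * X (x, y)))" if v: "0 \<le> v" "v \<le> 1" for v
    proof (rule Kp.integrable_const_bound[where B="exp c"])
      show "AE y in K x. norm (exp (t * v * X (x, y))) \<le> exp c"
        using ae
      proof eventually_elim
        case (elim y)
        have "\<bar>t * v * X (x, y)\<bar> \<le> c" unfolding c_def by (rule abs_twz_le[OF t0 v elim])
        then show ?case by simp
      qed
    qed (use Xym in measurable)
    have bnds: "AE y in K x. exp (- c) \<le> exp (t * X (x, y)) \<and> exp (t * X (x, y)) \<le> exp c"
      using ae
    proof eventually_elim
      case (elim y)
      have "\<bar>t * 1 * X (x, y)\<bar> \<le> c" unfolding c_def by (rule abs_twz_le[OF t0 _ _ elim]) auto
      then show ?case by auto
    qed
    have Grx: "Gr x = (\<integral>y. exp (t * X (x, y)) \<partial>K x)"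
      unfolding Gr_def using Xym by (subst integral_eq_nn_integral) auto
    have Grb: "exp (- c) \<le> Gr x \<and> Gr x \<le> exp c"
    proof -
      have int1: "integrable (K x) (\<lambda>y. exp (t * X (x, y)))" using int[of 1] by simp
      have "AE y in K x. exp (- c) \<le> exp (t * X (x, y))" using bnds by (rule eventually_mono) auto
      moreover have "AE y in K x. exp (t * X (x, y)) \<le> exp c" using bnds by (rule eventually_mono) auto
      ultimately show ?thesis unfolding Grx
        by (intro conjI Kp.integral_ge_const Kp.integral_le_const int1)
    qed
    then have gGr: "g x = Gr x" unfolding g_def by auto
    show ?thesis
    proof
      show "(\<integral>\<^sup>+y. ennreal (exp (t * w i * X (x, y))) \<partial>K x) = ennreal (\<integral>y. exp (t * w i * X (x, y)) \<partial>K x)"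
        using int[OF w0[OF i] w1[OF i]] by (intro nn_integral_eq_integral) auto
      have "(\<integral>y. exp (t * w i * X (x, y)) \<partial>K x) = (\<integral>y. exp (t * X (x, y)) powr w i \<partial>K x)"
        by (intro Bochner_Integration.integral_cong refl) (simp add: powr_def)
      also have "\<dots> \<le> (\<integral>y. exp (t * X (x, y)) \<partial>K x) powr w i"
        using Xym bnds w0[OF i] w1[OF i]
        by (intro jensen_powr_AE[OF Kp.prob_space_axioms, where a="exp (- c)" and b="exp c"]) auto
      also have "\<dots> = g x powr w i" using Grx gGr by simp
      finally show "(\<integral>y. exp (t * w i * X (x, y)) \<partial>K x) \<le> g x powr w i" .
    qed
  qed
  define F where "F \<phi> = (\<Prod>i<n. g (edge_feat k e \<phi> i) powr w i)" for \<phi>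
  have step2: "(\<integral>\<^sup>+\<phi>. (\<Prod>i<n. \<integral>\<^sup>+y. ennreal (exp (t * w i * X (edge_feat k e \<phi> i, y))) \<partial>K (edge_feat k e \<phi> i)) \<partial>FM)
      \<le> ennreal (\<integral>\<phi>. F \<phi> \<partial>FM)"
  proof -
    have gef: "(\<lambda>\<phi>. g (edge_feat k e \<phi> i)) \<in> borel_measurable FM" if "i < n" for i
      using measurable_compose[OF efm[OF that] gm] .
    have Fm: "F \<in> borel_measurable FM"
      unfolding F_def using gef by (intro borel_measurable_prod powr_real_measurable) auto
    have Fb: "0 \<le> F \<phi> \<and> F \<phi> \<le> (\<Prod>i<n. exp c powr w i)" for \<phi>
      unfolding F_def using gb w0 c0
      by (auto intro!: prod_nonneg prod_mono powr_mono2, (meson exp_gt_zero less_le_trans less_imp_le)+)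
    have Fint: "integrable FM F"
    proof -
      interpret FMi: prob_space FM by (rule FMp)
      show ?thesis using Fb Fm by (intro FMi.integrable_const_bound[where B="\<Prod>i<n. exp c powr w i"] AE_I2) auto
    qed
    have AEall: "AE \<phi> in FM. \<forall>i\<in>{..<n}. Gd (edge_feat k e \<phi> i)"
    proof (rule AE_finite_allI, simp)
      fix i assume "i \<in> {..<n}"
      then have i: "i < n" by simp
      have "AE x in distr FM PX (\<lambda>\<phi>. edge_feat k e \<phi> i). Gd x" by (subst efd[OF i]) (rule AEGd)
      from AE_distrD[OF efm[OF i] this] show "AE \<phi> in FM. Gd (edge_feat k e \<phi> i)" .
    qed
    have "(\<integral>\<^sup>+\<phi>. (\<Prod>i<n. \<integral>\<^sup>+y. ennreal (exp (t * w i * X (edge_feat k e \<phi> i, y))) \<partial>K (edge_feat k e \<phi> i)) \<partial>FM)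
        \<le> (\<integral>\<^sup>+\<phi>. ennreal (F \<phi>) \<partial>FM)"
    proof (rule nn_integral_mono_AE)
      show "AE \<phi> in FM. (\<Prod>i<n. \<integral>\<^sup>+y. ennreal (exp (t * w i * X (edge_feat k e \<phi> i, y))) \<partial>K (edge_feat k e \<phi> i)) \<le> ennreal (F \<phi>)"
        using AEall AE_space
      proof eventually_elim
        case (elim \<phi>)
        have ef: "edge_feat k e \<phi> i \<in> space PX" if "i < n" for i
          using measurable_space[OF efm[OF that] elim(2)] .
        define Hr where "Hr i = (\<integral>y. exp (t * w i * X (edge_feat k e \<phi> i, y)) \<partial>K (edge_feat k e \<phi> i))" for i
        have H: "(\<integral>\<^sup>+y. ennreal (exp (t * w i * X (edge_feat k e \<phi> i, y))) \<partial>K (edge_feat k e \<phi> i)) = ennreal (Hr i)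
            \<and> Hr i \<le> g (edge_feat k e \<phi> i) powr w i" if i: "i < n" for i
          unfolding Hr_def using Hle[OF ef[OF i] _ i] elim(1) i by auto
        have Hr0: "0 \<le> Hr i" for i unfolding Hr_def by (rule Bochner_Integration.integral_nonneg) simp
        have "(\<Prod>i<n. \<integral>\<^sup>+y. ennreal (exp (t * w i * X (edge_feat k e \<phi> i, y))) \<partial>K (edge_feat k e \<phi> i))
            = (\<Prod>i<n. ennreal (Hr i))" using H by (intro prod.cong) auto
        also have "\<dots> = ennreal (\<Prod>i<n. Hr i)" using Hr0 by (simp add: prod_ennreal)
        also have "\<dots> \<le> ennreal (F \<phi>)"
          unfolding F_def using H Hr0 by (intro ennreal_leI prod_mono) auto
        finally show ?case .
      qed
    qed
    also have "\<dots> = ennreal (\<integral>\<phi>. F \<phi> \<partial>FM)"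
      using Fint Fb by (intro nn_integral_eq_integral) auto
    finally show ?thesis .
  qed
  define e0 where "e0 = (\<integral>x. g x \<partial>PX)"
  have finner_app: "(\<integral>\<phi>. F \<phi> \<partial>FM) \<le> (\<Prod>i<n. e0 powr w i)"
  proof -
    define Sl where "Sl l = {(j, e l j) | j. j < k}" for l
    have "(\<integral>\<phi>. F \<phi> \<partial>FM) \<le> (\<Prod>l\<in>{..<n}. (\<integral>\<phi>. g (edge_feat k e \<phi> l) \<partial>FM) powr w l)"
      unfolding F_def FM_def
    proof (rule finner[where S=Sl and a="exp (- c)" and b="exp c"])
      show "finite V" by (rule Vfin)
      show "\<And>i. i \<in> V \<Longrightarrow> prob_space (\<rho> (fst i))" using rho Vfst by auto
      show "finite {..<n}" by simp
      show "\<And>l. l \<in> {..<n} \<Longrightarrow> (\<lambda>\<phi>. g (edge_feat k e \<phi> l)) \<in> borel_measurable (PiM V (\<lambda>v. \<rho> (fst v)))"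
        using measurable_compose[OF efm gm] unfolding FM_def by auto
      show "\<And>l x. l \<in> {..<n} \<Longrightarrow> x \<in> space (PiM V (\<lambda>v. \<rho> (fst v))) \<Longrightarrow>
              exp (- c) \<le> g (edge_feat k e x l) \<and> g (edge_feat k e x l) \<le> exp c"
        using gb by auto
      show "0 < exp (- c)" by simp
      show "\<And>l. l \<in> {..<n} \<Longrightarrow> 0 \<le> w l" using w0 by auto
      show "\<And>l x u z. l \<in> {..<n} \<Longrightarrow> x \<in> space (PiM V (\<lambda>v. \<rho> (fst v))) \<Longrightarrow> u \<in> V \<Longrightarrow> u \<notin> Sl l
              \<Longrightarrow> z \<in> space (\<rho> (fst u)) \<Longrightarrow> g (edge_feat k e (x(u := z)) l) = g (edge_feat k e x l)"
      proof -
        fix l :: nat and x :: "nat \<times> 'v \<Rightarrow> 'x" and u :: "nat \<times> 'v" and z :: 'x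
        assume "u \<notin> Sl l"
        then have "edge_feat k e (x(u := z)) l = edge_feat k e x l"
          unfolding edge_feat_def Sl_def by (auto simp: restrict_def fun_eq_iff)
        then show "g (edge_feat k e (x(u := z)) l) = g (edge_feat k e x l)" by simp
      qed
      show "\<And>u. u \<in> V \<Longrightarrow> (\<Sum>l\<in>{l \<in> {..<n}. u \<in> Sl l}. w l) \<le> 1"
      proof -
        fix u assume u: "u \<in> V"
        have j: "fst u < k" using Vfst[OF u] .
        have "{l \<in> {..<n}. u \<in> Sl l} = {i. i < n \<and> e i (fst u) = snd u}"
          unfolding Sl_def by (auto simp: prod_eq_iff j)
        then show "(\<Sum>l\<in>{l \<in> {..<n}. u \<in> Sl l}. w l) \<le> 1"
          using feas j unfolding feasible_weighting_def by auto
      qed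
    qed
    also have "\<dots> = (\<Prod>i<n. e0 powr w i)"
    proof (intro prod.cong refl)
      fix i assume "i \<in> {..<n}"
      then have i: "i < n" by simp
      have "(\<integral>\<phi>. g (edge_feat k e \<phi> i) \<partial>FM) = (\<integral>x. g x \<partial>distr FM PX (\<lambda>\<phi>. edge_feat k e \<phi> i))"
        by (rule integral_distr[OF efm[OF i] gm, symmetric])
      also have "\<dots> = e0" unfolding e0_def by (subst efd[OF i]) (rule refl)
      finally show "(\<integral>\<phi>. g (edge_feat k e \<phi> i) \<partial>FM) powr w i = e0 powr w i" by simp
    qed
    finally show ?thesis .
  qed
  have g0: "0 \<le> g x" for x using gb[of x] exp_gt_zero[of "-c"] by linarith
  have gint: "integrable PX g"
  proof -
    interpret PXi: prob_space PX by (rule PX)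
    show ?thesis using gm
      by (intro PXi.integrable_const_bound[where B="exp c"] AE_I2 norm_le_of_bounds[OF exp_gt_zero[of "-c"]] gb) auto
  qed
  have e0pos: "0 < e0"
  proof -
    interpret PXi: prob_space PX by (rule PX)
    have "exp (- c) \<le> e0" unfolding e0_def using gb by (intro PXi.integral_ge_const gint AE_I2) auto
    then show ?thesis using exp_gt_zero[of "-c"] by linarith
  qed
  have good: "g x = Gr x \<and> (\<integral>\<^sup>+y. ennreal (exp (t * X (x, y))) \<partial>K x) = ennreal (Gr x)"
    if x: "x \<in> space PX" "Gd x" for x
  proof -
    interpret Kp: prob_space "K x" using Kx[OF x(1)] by auto
    have ae: "AE y in K x. \<bar>X (x, y)\<bar> \<le> M" using x(2) unfolding Gd_def .
    have Xym: "(\<lambda>y. X (x, y)) \<in> borel_measurable (K x)" by (rule Xy[OF x(1)])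
    have bnds: "AE y in K x. exp (- c) \<le> exp (t * X (x, y)) \<and> exp (t * X (x, y)) \<le> exp c"
      using ae
    proof eventually_elim
      case (elim y)
      have "\<bar>t * 1 * X (x, y)\<bar> \<le> c" unfolding c_def by (rule abs_twz_le[OF t0 _ _ elim]) auto
      then show ?case by auto
    qed
    have int1: "integrable (K x) (\<lambda>y. exp (t * X (x, y)))"
    proof (rule Kp.integrable_const_bound[where B="exp c"])
      show "AE y in K x. norm (exp (t * X (x, y))) \<le> exp c" using bnds by (rule eventually_mono) auto
    qed (use Xym in measurable)
    have Grx: "Gr x = (\<integral>y. exp (t * X (x, y)) \<partial>K x)"
      unfolding Gr_def using Xym by (subst integral_eq_nn_integral) auto
    have Grb: "exp (- c) \<le> Gr x \<and> Gr x \<le> exp c"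
    proof -
      have "AE y in K x. exp (- c) \<le> exp (t * X (x, y))" using bnds by (rule eventually_mono) auto
      moreover have "AE y in K x. exp (t * X (x, y)) \<le> exp c" using bnds by (rule eventually_mono) auto
      ultimately show ?thesis unfolding Grx
        by (intro conjI Kp.integral_ge_const Kp.integral_le_const int1)
    qed
    have "(\<integral>\<^sup>+y. ennreal (exp (t * X (x, y))) \<partial>K x) = ennreal (Gr x)"
      unfolding Grx using int1 by (intro nn_integral_eq_integral) auto
    then show ?thesis using Grb unfolding g_def by auto
  qed
  have e0B: "e0 \<le> 1 + t\<^sup>2 * \<sigma>\<^sup>2 / (2 * (1 - c / 3))"
  proof -
    interpret Dm: prob_space D by (rule Dp)
    have c3: "c < 3" using tM unfolding c_def .
    define Bz where "Bz z = 1 + t * X z + t\<^sup>2 / (2 * (1 - c / 3)) * (X z)\<^sup>2" for z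
    have Xint: "integrable D X"
      using bndD XmD by (intro Dm.integrable_const_bound[where B=M]) (auto elim: eventually_mono)
    have X2int: "integrable D (\<lambda>z. (X z)\<^sup>2)"
    proof (rule Dm.integrable_const_bound[where B="M\<^sup>2"])
      show "AE z in D. norm ((X z)\<^sup>2) \<le> M\<^sup>2" using bndD
      proof eventually_elim
        case (elim z)
        then show ?case by (simp add: abs_le_square_iff) (metis abs_abs abs_le_square_iff abs_of_nonneg M0 elim power2_abs)
      qed
    qed (use XmD in measurable)
    have EX: "(\<integral>z. X z \<partial>D) = 0"
    proof -
      have xiint: "integrable D \<xi>"
      proof -
        have "integrable D (\<lambda>z. X z + \<mu>)" using Xint by simp
        then show ?thesis unfolding X_def by simp
      qed
      have "(\<integral>z. X z \<partial>D) = (\<integral>z. \<xi> z \<partial>D) - \<mu>"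
        unfolding X_def using xiint by (simp add: Dm.prob_space)
      then show ?thesis using mu unfolding D_def by simp
    qed
    have EX2: "(\<integral>z. (X z)\<^sup>2 \<partial>D) = \<sigma>\<^sup>2" using sig unfolding D_def X_def by simp
    have "ennreal e0 = (\<integral>\<^sup>+x. ennreal (g x) \<partial>PX)"
      unfolding e0_def using gint
      by (intro nn_integral_eq_integral[symmetric] AE_I2) (auto intro: g0)
    also have "\<dots> = (\<integral>\<^sup>+x. \<integral>\<^sup>+y. ennreal (exp (t * X (x, y))) \<partial>K x \<partial>PX)"
    proof (rule nn_integral_cong_AE)
      show "AE x in PX. ennreal (g x) = (\<integral>\<^sup>+y. ennreal (exp (t * X (x, y))) \<partial>K x)"
        using AEGd AE_space
      proof eventually_elim
        case (elim x)
        then show ?case using good[OF elim(2) elim(1)] by simp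
      qed
    qed
    also have "\<dots> = (\<integral>\<^sup>+z. ennreal (exp (t * X z)) \<partial>D)"
    proof -
      have "(\<integral>\<^sup>+z. ennreal (exp (t * X z)) \<partial>D) = (\<integral>\<^sup>+x. \<integral>\<^sup>+z. ennreal (exp (t * X z)) \<partial>KD x \<partial>PX)"
        unfolding D using Xm by (intro nn_integral_bind[OF _ measurable_prob_algebraD[OF KDm]]) measurable
      also have "\<dots> = (\<integral>\<^sup>+x. \<integral>\<^sup>+y. ennreal (exp (t * X (x, y))) \<partial>K x \<partial>PX)"
      proof (rule nn_integral_cong)
        fix x assume x: "x \<in> space PX"
        have T: "(\<lambda>y. (x, y)) \<in> K x \<rightarrow>\<^sub>M PX \<Otimes>\<^sub>M borel"
          using measurable_Pair1'[OF x, of borel] Kx[OF x] by (simp cong: measurable_cong_sets)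
        show "(\<integral>\<^sup>+z. ennreal (exp (t * X z)) \<partial>KD x) = (\<integral>\<^sup>+y. ennreal (exp (t * X (x, y))) \<partial>K x)"
          unfolding KD_def using Xm by (intro nn_integral_distr[OF T]) measurable
      qed
      finally show ?thesis by simp
    qed
    also have "\<dots> \<le> (\<integral>\<^sup>+z. ennreal (Bz z) \<partial>D)"
    proof (rule nn_integral_mono_AE)
      show "AE z in D. ennreal (exp (t * X z)) \<le> ennreal (Bz z)" using bndD
      proof eventually_elim
        case (elim z)
        have "\<bar>t * 1 * X z\<bar> \<le> c" unfolding c_def by (rule abs_twz_le[OF t0 _ _ elim]) auto
        then have "exp (t * X z) \<le> 1 + t * X z + (t * X z)\<^sup>2 / (2 * (1 - c / 3))"
          using exp_bernstein_pt[OF _ c3] by simp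
        also have "\<dots> = Bz z" unfolding Bz_def by (simp add: power_mult_distrib)
        finally show ?case by (rule ennreal_leI)
      qed
    qed
    also have "\<dots> = ennreal (\<integral>z. Bz z \<partial>D)"
    proof (rule nn_integral_eq_integral)
      show "integrable D Bz" unfolding Bz_def using Xint X2int by auto
      show "AE z in D. 0 \<le> Bz z" using bndD
      proof eventually_elim
        case (elim z)
        have "\<bar>t * 1 * X z\<bar> \<le> c" unfolding c_def by (rule abs_twz_le[OF t0 _ _ elim]) auto
        then have "exp (t * X z) \<le> 1 + t * X z + (t * X z)\<^sup>2 / (2 * (1 - c / 3))"
          using exp_bernstein_pt[OF _ c3] by simp
        also have "\<dots> = Bz z" unfolding Bz_def by (simp add: power_mult_distrib)
        finally show ?case using exp_gt_zero[of "t * X z"] by linarith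
      qed
    qed
    also have "(\<integral>z. Bz z \<partial>D) = 1 + t\<^sup>2 * \<sigma>\<^sup>2 / (2 * (1 - c / 3))"
      unfolding Bz_def using Xint X2int EX EX2 by (simp add: Dm.prob_space)
    finally have "ennreal e0 \<le> ennreal (1 + t\<^sup>2 * \<sigma>\<^sup>2 / (2 * (1 - c / 3)))" .
    moreover have "0 \<le> 1 + t\<^sup>2 * \<sigma>\<^sup>2 / (2 * (1 - c / 3))"
      using c3 by (intro add_nonneg_nonneg divide_nonneg_pos) auto
    ultimately show ?thesis by (simp add: ennreal_le_iff)
  qed
  define q where "q = t\<^sup>2 * \<sigma>\<^sup>2 / (2 * (1 - c / 3))"
  have q0: "0 \<le> q" unfolding q_def c_def using tM by (intro divide_nonneg_pos) (auto simp: mult.commute)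
  have "e0 powr s \<le> (1 + q) powr s"
    using e0pos e0B s0 unfolding q_def by (intro powr_mono2) auto
  also have "\<dots> \<le> exp q powr s"
    using q0 s0 by (intro powr_mono2) auto
  also have "\<dots> = exp (s * q)" by (simp add: powr_def)
  finally have pw: "e0 powr s \<le> exp (s * q)" .
  have prodE: "(\<Prod>i<n. e0 powr w i) = e0 powr s"
    unfolding s using e0pos by (simp add: powr_sum)
  have "emeasure NS A \<le> ennreal (exp (- t * \<epsilon>)) * ennreal (\<integral>\<phi>. F \<phi> \<partial>FM)"
    using markov mgf_split step2 by (metis (no_types, lifting) mult_left_mono order_trans zero_le)
  also have "\<dots> \<le> ennreal (exp (- t * \<epsilon>)) * ennreal (e0 powr s)"
    using finner_app prodE by (intro mult_left_mono ennreal_leI) auto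
  also have "\<dots> = ennreal (exp (- t * \<epsilon>) * e0 powr s)" by (simp add: ennreal_mult)
  finally have "measure NS A \<le> exp (- t * \<epsilon>) * e0 powr s"
    unfolding measure_def by (intro enn2real_leI) auto
  also have "\<dots> \<le> exp (- t * \<epsilon>) * exp (s * q)" using pw by (intro mult_left_mono) auto
  also have "\<dots> = exp (- t * \<epsilon> + s * q)" by (simp add: exp_add[symmetric])
  finally show ?thesis unfolding A_def S_def X_def NS_def s_def q_def c_def by simp
qed

theorem lemma3:
  fixes k n :: nat and e :: "nat \<Rightarrow> nat \<Rightarrow> 'v"
    and \<rho> :: "nat \<Rightarrow> 'x measure" and K :: "(nat \<Rightarrow> 'x) \<Rightarrow> real measure"
    and \<xi> :: "(nat \<Rightarrow> 'x) \<times> real \<Rightarrow> real"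
    and w :: "nat \<Rightarrow> real" and \<mu> \<sigma> M \<epsilon> :: real
  assumes "k \<ge> 1"
    and "\<And>j. j < k \<Longrightarrow> prob_space (\<rho> j)"
    and "K \<in> measurable (PiM {..<k} \<rho>) (prob_algebra borel)"
    and "\<xi> \<in> borel_measurable (PiM {..<k} \<rho> \<Otimes>\<^sub>M borel)"
    and "\<mu> = (\<integral>z. \<xi> z \<partial>data_dist k \<rho> K)"
    and "\<sigma>\<^sup>2 = (\<integral>z. (\<xi> z - \<mu>)\<^sup>2 \<partial>data_dist k \<rho> K)"
    and "AE z in data_dist k \<rho> K. \<bar>\<xi> z - \<mu>\<bar> \<le> M"
    and "optimal_weighting k n e w"
    and "\<epsilon> > 0"
  shows "measure (networked_sample k n e \<rho> K)
           {\<omega> \<in> space (networked_sample k n e \<rho> K).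
              (\<Sum>i<n. w i * (\<xi> (edge_feat k e (fst \<omega>) i, snd \<omega> i) - \<mu>)) \<ge> \<epsilon>}
         \<le> exp (- (\<epsilon>\<^sup>2 / (2 * (s_value k n e * \<sigma>\<^sup>2 + M * \<epsilon> / 3))))"
proof -
  define s where "s = s_value k n e"
  define NS where "NS = networked_sample k n e \<rho> K"
  define Ev where "Ev = {\<omega> \<in> space NS. (\<Sum>i<n. w i * (\<xi> (edge_feat k e (fst \<omega>) i, snd \<omega> i) - \<mu>)) \<ge> \<epsilon>}"
  have core': "measure NS Ev \<le> exp (- t * \<epsilon> + s * (t\<^sup>2 * \<sigma>\<^sup>2 / (2 * (1 - t * M / 3))))"
    if "0 \<le> t" "t * M < 3" for t
    unfolding NS_def Ev_def s_def
    by (rule chernoff_core[OF assms(1) _ assms(3-8) that]) (rule assms(2))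
  have s0: "0 \<le> s"
  proof -
    have "s = (\<Sum>i<n. w i)" using assms(8) unfolding optimal_weighting_def s_def by auto
    moreover have "\<forall>i<n. 0 \<le> w i" using assms(8) unfolding optimal_weighting_def feasible_weighting_def by auto
    ultimately show ?thesis by (metis lessThan_iff sum_nonneg)
  qed
  have M0: "0 \<le> M"
  proof -
    have PX: "prob_space (PiM {..<k} \<rho>)" using assms(2) by (intro prob_space_PiM) auto
    have KDm: "(\<lambda>x. distr (K x) (PiM {..<k} \<rho> \<Otimes>\<^sub>M borel) (\<lambda>y. (x, y))) \<in> PiM {..<k} \<rho> \<rightarrow>\<^sub>M prob_algebra (PiM {..<k} \<rho> \<Otimes>\<^sub>M borel)"
      by (rule measurable_distr_prob_space2[OF assms(3)]) simp
    have Dp: "prob_space (data_dist k \<rho> K)"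
      unfolding data_dist_def using PX KDm by (intro prob_space_bind') (auto simp: space_prob_algebra)
    have "AE z in data_dist k \<rho> K. 0 \<le> M" using assms(7) by eventually_elim auto
    then show ?thesis using prob_space.AE_const[OF Dp] by simp
  qed
  define Q where "Q = s * \<sigma>\<^sup>2"
  have Q0: "0 \<le> Q" unfolding Q_def using s0 by simp
  have goal: "measure NS Ev \<le> exp (- (\<epsilon>\<^sup>2 / (2 * (s * \<sigma>\<^sup>2 + M * \<epsilon> / 3))))"
  proof (cases "Q > 0")
    case True
    define R where "R = Q + M * \<epsilon> / 3"
    have R: "0 < R" unfolding R_def using True M0 assms(9) by (intro add_pos_nonneg) auto
    define t where "t = \<epsilon> / R"
    have t0: "0 \<le> t" unfolding t_def using R assms(9) by simp
    have tM: "t * M < 3"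
    proof -
      have "\<epsilon> * M < 3 * R" unfolding R_def using True by simp
      then show ?thesis unfolding t_def using R by (simp add: field_simps)
    qed
    have eq: "- t * \<epsilon> + s * (t\<^sup>2 * \<sigma>\<^sup>2 / (2 * (1 - t * M / 3))) = - (\<epsilon>\<^sup>2 / (2 * (s * \<sigma>\<^sup>2 + M * \<epsilon> / 3)))"
    proof -
      have 1: "1 - t * M / 3 = Q / R" unfolding t_def R_def using R by (simp add: R_def field_simps)
      have "s * (t\<^sup>2 * \<sigma>\<^sup>2 / (2 * (1 - t * M / 3))) = t\<^sup>2 * Q / (2 * (Q / R))"
        unfolding 1 Q_def by simp
      also have "\<dots> = t\<^sup>2 * R / 2" using True R by (simp add: field_simps)
      also have "\<dots> = \<epsilon>\<^sup>2 / (2 * R)" unfolding t_def using R by (simp add: field_simps power2_eq_square)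
      finally have 2: "s * (t\<^sup>2 * \<sigma>\<^sup>2 / (2 * (1 - t * M / 3))) = \<epsilon>\<^sup>2 / (2 * R)" .
      have 3: "- t * \<epsilon> = - (\<epsilon>\<^sup>2 / R)" unfolding t_def by (simp add: power2_eq_square)
      have 4: "s * \<sigma>\<^sup>2 + M * \<epsilon> / 3 = R" unfolding R_def Q_def ..
      have "- (\<epsilon>\<^sup>2 / R) + \<epsilon>\<^sup>2 / (2 * R) = - (\<epsilon>\<^sup>2 / (2 * R))" using R by (simp add: field_simps)
      then show ?thesis unfolding 2 3 4 .
    qed
    show ?thesis using core'[OF t0 tM] unfolding eq .
  next
    case False
    then have Q: "Q = 0" using Q0 by simp
    then have sQ: "s * \<sigma>\<^sup>2 = 0" unfolding Q_def .
    show ?thesis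
    proof (cases "M = 0")
      case True
      have "measure NS Ev \<le> exp (- 0 * \<epsilon> + s * (0\<^sup>2 * \<sigma>\<^sup>2 / (2 * (1 - 0 * M / 3))))"
        by (rule core') auto
      then show ?thesis using True sQ by (simp only: sQ True) simp
    next
      case False
      then have Mp: "0 < M" using M0 by simp
      define t where "t = 3 / (2 * M)"
      have t0: "0 \<le> t" unfolding t_def using Mp by simp
      have tM: "t * M < 3" unfolding t_def using Mp by simp
      have eq: "- t * \<epsilon> + s * (t\<^sup>2 * \<sigma>\<^sup>2 / (2 * (1 - t * M / 3))) = - (\<epsilon>\<^sup>2 / (2 * (s * \<sigma>\<^sup>2 + M * \<epsilon> / 3)))"
      proof -
        have "s * (t\<^sup>2 * \<sigma>\<^sup>2 / (2 * (1 - t * M / 3))) = (s * \<sigma>\<^sup>2) * t\<^sup>2 / (2 * (1 - t * M / 3))"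
          by (simp add: field_simps)
        then have z: "s * (t\<^sup>2 * \<sigma>\<^sup>2 / (2 * (1 - t * M / 3))) = 0" using sQ by simp
        show ?thesis unfolding z sQ t_def using Mp assms(9) sQ by (simp add: field_simps power2_eq_square)
      qed
      show ?thesis using core'[OF t0 tM] unfolding eq .
    qed
  qed
  then show ?thesis unfolding NS_def Ev_def s_def .
qed


end
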